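(* For any constant $0<\eta\leq 1/4$, every $n$-vertex $d$-regular graph $G$ with $2/\eta\leq d\leq \eta\sqrt{n}$ contains $d$ pairwise vertex-disjoint copies of the star $K_{1,(1-\eta/2)d}$.
   Context: Floors are omitted: $K_{1,(1-\eta/2)d}$ means the star with $\lfloor(1-\eta/2)d\rfloor$ leaves. *)

theory Defs
  imports "HOL-Analysis.Analysis"
begin

definition simple_graph :: "'a set \<Rightarrow> ('a \<Rightarrow> 'a \<Rightarrow> bool) \<Rightarrow> bool" where
  "simple_graph V E \<longleftrightarrow> finite V \<and>
     (\<forall>u v. E u v \<longrightarrow> u \<in> V \<and> v \<in> V) \<and>
     (\<forall>u v. E u v \<longrightarrow> E v u) \<and> (\<forall>v. \<not> E v v)"

definition neighbours :: "'a set \<Rightarrow> ('a \<Rightarrow> 'a \<Rightarrow> bool) \<Rightarrow> 'a \<Rightarrow> 'a set" where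
  "neighbours V E v = {u \<in> V. E v u}"

definition regular :: "'a set \<Rightarrow> ('a \<Rightarrow> 'a \<Rightarrow> bool) \<Rightarrow> nat \<Rightarrow> bool" where
  "regular V E d \<longleftrightarrow> (\<forall>v \<in> V. card (neighbours V E v) = d)"

text \<open>A copy of the star K_{1,k} in the graph: a centre c and a set L of k
  leaves, all adjacent to c (c is not in L since E is irreflexive).\<close>
definition is_star :: "'a set \<Rightarrow> ('a \<Rightarrow> 'a \<Rightarrow> bool) \<Rightarrow> nat \<Rightarrow> 'a \<Rightarrow> 'a set \<Rightarrow> bool" where
  "is_star V E k c L \<longleftrightarrow> c \<in> V \<and> L \<subseteq> neighbours V E c \<and> card L = k"

end

theory Submission
  imports Defs
begin

lemma count_lemma:
  assumes sg: "simple_graph V E" and reg: "regular V E d" and UV: "U \<subseteq> V"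
    and lt: "card U * d < card (V - U) * (t + 1)"
  shows "\<exists>c\<in>V - U. card (neighbours V E c \<inter> U) \<le> t"
proof (rule ccontr)
  assume "\<not> ?thesis"
  hence big: "\<forall>c\<in>V-U. t + 1 \<le> card (neighbours V E c \<inter> U)" by force
  have fin: "finite V" using sg unfolding simple_graph_def by auto
  have finU: "finite U" using fin UV finite_subset by blast
  have "card (V - U) * (t+1) = (\<Sum>c\<in>V-U. t+1)" by simp
  also have "\<dots> \<le> (\<Sum>c\<in>V-U. card (neighbours V E c \<inter> U))"
    by (rule sum_mono) (use big in auto)
  also have "\<dots> = (\<Sum>c\<in>V-U. \<Sum>u\<in>U. if E c u then 1 else 0)"
  proof (rule sum.cong)
    fix c assume "c \<in> V - U"
    have "neighbours V E c \<inter> U = {u\<in>U. E c u}" using UV unfolding neighbours_def by auto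
    thus "card (neighbours V E c \<inter> U) = (\<Sum>u\<in>U. if E c u then 1 else 0)"
    proof -
      have "U \<inter> Collect (E c) = {u\<in>U. E c u}" by blast
      thus ?thesis using finU \<open>neighbours V E c \<inter> U = {u\<in>U. E c u}\<close> by (simp add: sum.If_cases)
    qed
  qed simp
  also have "\<dots> = (\<Sum>u\<in>U. \<Sum>c\<in>V-U. if E c u then 1 else 0)" by (rule sum.swap)
  also have "\<dots> \<le> (\<Sum>u\<in>U. d)"
  proof (rule sum_mono)
    fix u assume u: "u \<in> U"
    have "{c\<in>V-U. E c u} \<subseteq> neighbours V E u"
      using sg unfolding neighbours_def simple_graph_def by auto
    hence "card {c\<in>V-U. E c u} \<le> card (neighbours V E u)"
      by (rule card_mono[rotated]) (simp add: neighbours_def fin)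
    also have "\<dots> = d" using reg u UV unfolding regular_def by auto
    finally have "card {c\<in>V-U. E c u} \<le> d" .
    moreover have "(\<Sum>c\<in>V-U. if E c u then 1 else 0) = card {c\<in>V-U. E c u}"
    proof -
      have "(V - U) \<inter> {c. E c u} = {c\<in>V-U. E c u}" by blast
      thus ?thesis using fin by (simp add: sum.If_cases)
    qed
    ultimately show "(\<Sum>c\<in>V-U. if E c u then 1 else 0) \<le> d" by simp
  qed
  also have "\<dots> = card U * d" by simp
  finally show False using lt by simp
qed

theorem lemma6p1:
  fixes V :: "'a set" and E :: "'a \<Rightarrow> 'a \<Rightarrow> bool" and \<eta> :: real and n d :: nat
  assumes "0 < \<eta>" and "\<eta> \<le> 1/4"
    and "simple_graph V E" and "card V = n" and "regular V E d"
    and "2 / \<eta> \<le> real d" and "real d \<le> \<eta> * sqrt (real n)"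
  shows "\<exists>c :: nat \<Rightarrow> 'a. \<exists>L :: nat \<Rightarrow> 'a set.
           (\<forall>i < d. is_star V E (nat \<lfloor>(1 - \<eta>/2) * real d\<rfloor>) (c i) (L i)) \<and>
           (\<forall>i < d. \<forall>j < d. i \<noteq> j \<longrightarrow> (insert (c i) (L i)) \<inter> (insert (c j) (L j)) = {})"
proof -
  define k where "k = nat \<lfloor>(1 - \<eta>/2) * real d\<rfloor>"
  have fin: "finite V" using assms(3) unfolding simple_graph_def by auto
  have d2: "\<eta> * real d \<ge> 2" using assms(1,6) by (simp add: field_simps)
  have kle: "real k \<le> (1 - \<eta>/2) * real d"
  proof -
    have "(1 - \<eta>/2) * real d \<ge> 0" using assms(1,2) by simp
    thus ?thesis unfolding k_def by linarith
  qed
  have k1: "k + 1 \<le> d"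
  proof -
    have "real k \<le> real d - \<eta> * real d / 2" using kle by (simp add: algebra_simps)
    hence "real k + 1 \<le> real d" using d2 by linarith
    thus ?thesis by linarith
  qed
  have dpos: "real d > 0"
  proof (rule ccontr)
    assume "\<not> real d > 0" hence "real d = 0" by simp
    thus False using d2 by simp
  qed
  have sq: "real d ^ 2 \<le> \<eta>^2 * real n"
  proof -
    have "real d ^ 2 \<le> (\<eta> * sqrt (real n))^2"
      using assms(7) dpos by (intro power_mono) auto
    thus ?thesis by (simp add: power_mult_distrib)
  qed
  have step: "\<forall>m\<le>d. \<exists>c L. (\<forall>i<m. is_star V E k (c i) (L i)) \<and>
     (\<forall>i<m. \<forall>j<m. i \<noteq> j \<longrightarrow> insert (c i) (L i) \<inter> insert (c j) (L j) = {})"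
  proof (intro allI impI)
    fix m assume "m \<le> d"
    thus "\<exists>c L. (\<forall>i<m. is_star V E k (c i) (L i)) \<and>
     (\<forall>i<m. \<forall>j<m. i \<noteq> j \<longrightarrow> insert (c i) (L i) \<inter> insert (c j) (L j) = {})"
    proof (induction m)
      case 0 thus ?case by auto
    next
      case (Suc m)
      then obtain c L where st: "\<forall>i<m. is_star V E k (c i) (L i)" and
        dj: "\<forall>i<m. \<forall>j<m. i \<noteq> j \<longrightarrow> insert (c i) (L i) \<inter> insert (c j) (L j) = {}" by auto
      define U where "U = (\<Union>i<m. insert (c i) (L i))"
      have UV: "U \<subseteq> V" using st unfolding U_def is_star_def neighbours_def by auto
      have finU: "finite U" using UV fin finite_subset by blast
      have "card U \<le> (\<Sum>i<m. card (insert (c i) (L i)))" unfolding U_def by (rule card_UN_le) simp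
      also have "\<dots> \<le> (\<Sum>i<m. k + 1)"
      proof (rule sum_mono)
        fix i assume "i \<in> {..<m}"
        hence "card (L i) = k" using st unfolding is_star_def by auto
        thus "card (insert (c i) (L i)) \<le> k + 1" by (cases "finite (L i)") (auto simp: card_insert_if)
      qed
      also have "\<dots> = m * (k+1)" by simp
      finally have cU: "card U \<le> m * (k+1)" .
      have "m * (k+1) \<le> (d - 1) * d" using Suc.prems k1 by (intro mult_mono) auto
      hence "card U \<le> (d - 1) * d" using cU by linarith
      hence "real (card U) \<le> real ((d - 1) * d)" by (simp only: of_nat_le_iff)
      hence "real (card U) \<le> (real d - 1) * real d" using k1 by (simp add: of_nat_diff)
      hence uU: "real (card U) < \<eta>^2 * real n" using sq dpos by (simp add: power2_eq_square algebra_simps)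
      have cVU: "real (card (V - U)) = real n - real (card U)"
      proof -
        have "card U \<le> n" using card_mono[OF fin UV] assms(4) by simp
        thus ?thesis using UV finU assms(4) by (simp add: card_Diff_subset of_nat_diff)
      qed
      define t where "t = d - k"
      have tr: "real t + 1 > \<eta> * real d / 2" using kle k1 unfolding t_def by (simp add: of_nat_diff algebra_simps)
      have A: "real (card U) * (1 + \<eta>/2) \<le> real n * \<eta> / 2"
      proof -
        have "\<eta>^2 * (1 + \<eta>/2) \<le> \<eta> / 2"
        proof -
          have "\<eta> * (1 + \<eta>/2) \<le> 1/2" using assms(1,2) mult_mono[of \<eta> "1/4" \<eta> "1/4"] by (simp add: algebra_simps)
          hence "\<eta> * (\<eta> * (1 + \<eta>/2)) \<le> \<eta> * (1/2)" using assms(1) by (intro mult_left_mono) auto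
          thus ?thesis by (simp add: power2_eq_square algebra_simps)
        qed
        have "real (card U) * (1 + \<eta>/2) \<le> \<eta>^2 * real n * (1 + \<eta>/2)"
          using uU assms(1) by (intro mult_right_mono) auto
        also have "\<dots> = real n * (\<eta>^2 * (1 + \<eta>/2))" by simp
        also have "\<dots> \<le> real n * (\<eta>/2)" using \<open>\<eta>^2 * (1 + \<eta>/2) \<le> \<eta> / 2\<close> by (intro mult_left_mono) auto
        finally show ?thesis by simp
      qed
      hence B: "real (card U) \<le> real (card (V-U)) * (\<eta>/2)"
      proof -
        have "real n * \<eta> = real (card U) * \<eta> + real (card (V-U)) * \<eta>" 
        proof -
          have "real n = real (card U) + real (card (V-U))" using cVU by simp
          thus ?thesis by (simp add: ring_distribs)
        qed
        thus ?thesis using A by (simp add: algebra_simps)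
      qed
      have npos: "real n > 0"
      proof (rule ccontr)
        assume "\<not> real n > 0" hence "real n = 0" by simp
        hence "real d ^ 2 \<le> 0" using sq by simp
        moreover have "real d ^ 2 > 0" using dpos by simp
        ultimately show False by linarith
      qed
      have "real (card U) * real d \<le> (real (card (V-U)) * (\<eta>/2)) * real d"
        using mult_right_mono[OF B, of "real d"] by simp
      also have "\<dots> = real (card (V-U)) * (\<eta> * real d / 2)" by simp
      also have "\<dots> < real (card (V-U)) * (real t + 1)"
      proof (rule mult_strict_left_mono[OF tr])
        have "real (card U) * (1 + \<eta>/2) < real n"
        proof -
          have "real n * (\<eta>/2) < real n * 1" using npos assms(2)
            by (intro mult_strict_left_mono) auto
          thus ?thesis using A by simp
        qed
        moreover have "real (card U) * (1 + \<eta>/2) = real (card U) + real (card U) * (\<eta>/2)"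
          by (simp only: distrib_left mult_1_right)
        moreover have "0 \<le> real (card U) * (\<eta>/2)" using assms(1) by simp
        ultimately have "real (card U) < real n" by linarith
        thus "0 < real (card (V - U))" using cVU by linarith
      qed
      finally have "real (card U * d) < real (card (V - U) * (t + 1))" by (simp only: of_nat_mult of_nat_add of_nat_1)
      hence lt: "card U * d < card (V - U) * (t + 1)" by linarith
      obtain c0 where c0: "c0 \<in> V - U" "card (neighbours V E c0 \<inter> U) \<le> t"
        using count_lemma[OF assms(3) assms(5) UV lt] by blast
      have Nc: "card (neighbours V E c0) = d" using assms(5) c0 unfolding regular_def by auto
      have finN: "finite (neighbours V E c0)" using fin by (simp add: neighbours_def)
      have "card (neighbours V E c0 - U) = d - card (neighbours V E c0 \<inter> U)"
        using Nc finN by (simp add: card_Diff_subset_Int)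
      hence "k \<le> card (neighbours V E c0 - U)" using c0 k1 unfolding t_def by linarith
      then obtain L0 where L0: "L0 \<subseteq> neighbours V E c0 - U" "card L0 = k"
        by (meson obtain_subset_with_card_n)
      have st0: "is_star V E k c0 L0" using L0 c0 unfolding is_star_def by auto
      have c0L0: "c0 \<notin> L0" using L0 assms(3) unfolding neighbours_def simple_graph_def by auto
      have dis0: "\<forall>i<m. insert c0 L0 \<inter> insert (c i) (L i) = {}"
        using L0 c0 unfolding U_def by auto
      show ?case
      proof (intro exI conjI)
        show "\<forall>i<Suc m. is_star V E k ((c(m:=c0)) i) ((L(m:=L0)) i)"
          using st st0 by (auto simp: less_Suc_eq)
        show "\<forall>i<Suc m. \<forall>j<Suc m. i \<noteq> j \<longrightarrow> insert ((c(m:=c0)) i) ((L(m:=L0)) i) \<inter> insert ((c(m:=c0)) j) ((L(m:=L0)) j) = {}"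
        proof (intro allI impI)
          fix i j assume ij: "i < Suc m" "j < Suc m" "i \<noteq> j"
          show "insert ((c(m:=c0)) i) ((L(m:=L0)) i) \<inter> insert ((c(m:=c0)) j) ((L(m:=L0)) j) = {}"
          proof (cases "i = m")
            case True thus ?thesis using ij dis0 by simp
          next
            case False note Fi = False
            show ?thesis
            proof (cases "j = m")
              case True thus ?thesis using ij dis0 Fi by (simp add: Int_commute)
            next
              case False thus ?thesis using ij dj Fi by simp
            qed
          qed
        qed
      qed
    qed
  qed
  from spec[OF step, of d] have "\<exists>c L. (\<forall>i<d. is_star V E k (c i) (L i)) \<and>
     (\<forall>i<d. \<forall>j<d. i \<noteq> j \<longrightarrow> insert (c i) (L i) \<inter> insert (c j) (L j) = {})" by simp
  thus ?thesis by (simp only: k_def)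
qed

end
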